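(* Let $n,m_A,m_B>0$ be integers, $A,B$ quantum systems of dimensions $m_A,m_B$, and $\psi_{AB}$ a bipartite state with $\psi_A=\mathrm{id}_{m_A}/m_A$ and $\psi_B=\mathrm{id}_{m_B}/m_B$. Let $\mathcal{T}:\mathcal{M}(B^n)\to\mathcal{M}(A^n)$ be the Markov super-operator with respect to $\psi_{AB}^{\otimes n}$. Then for every $Q\in\mathcal{M}(B^n)$ and every $S\subseteq[n]$, $\mathcal{T}(Q[S])=\mathcal{T}(Q)[S]$.
   Context: A standard orthonormal basis of $\mathcal{M}_k$ (complex $k\times k$ matrices with inner product $\langle X,Y\rangle=\frac1k\mathrm{Tr}X^\dagger Y$) is an orthonormal basis $\{\mathcal{B}_0,\ldots,\mathcal{B}_{k^2-1}\}$ of Hermitian matrices with $\mathcal{B}_0=\mathrm{id}_k$. For $\sigma\in\{0,\ldots,k^2-1\}^n$ put $\mathcal{B}_\sigma=\mathcal{B}_{\sigma_1}\otimes\cdots\otimes\mathcal{B}_{\sigma_n}$; every $X\in\mathcal{M}_k^{\otimes n}$ has a unique expansion $X=\sum_\sigma\widehat X(\sigma)\mathcal{B}_\sigma$. The Efron–Stein component is $X[S]=\sum_{\sigma:\{i:\sigma_i\neq0\}=S}\widehat X(\sigma)\mathcal{B}_\sigma$; it does not depend on the choice of standard orthonormal basis. On $A^n$ and $B^n$ the inner products are $\langle X,Y\rangle=\frac1{m_A^n}\mathrm{Tr}X^\dagger Y$ and $\frac1{m_B^n}\mathrm{Tr}X^\dagger Y$ respectively. The Markov super-operator with respect to $\psi_{AB}^{\otimes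 n}$ is the map $\mathcal{T}:\mathcal{M}(B^n)\to\mathcal{M}(A^n)$ with $\mathrm{Tr}((M^\dagger\otimes Q)\psi_{AB}^{\otimes n})=\langle M,\mathcal{T}(Q)\rangle$ for all $M\in\mathcal{M}(A^n)$, $Q\in\mathcal{M}(B^n)$. *)

theory Defs
  imports "HOL-Analysis.Analysis" "HOL-Library.Complex_Order" "HOL-Library.FuncSet"
begin

type_synonym cmat1 = "nat \<Rightarrow> nat \<Rightarrow> complex"
  (* single-site k x k matrix; only entries with indices < k are meaningful *)
type_synonym cmatn = "(nat \<Rightarrow> nat) \<Rightarrow> (nat \<Rightarrow> nat) \<Rightarrow> complex"
  (* matrix on (C^k)^{\<otimes> n}, rows/columns indexed by tuples x : {0..<n} \<rightarrow> {0..<k} *)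

definition idx :: "nat \<Rightarrow> nat \<Rightarrow> (nat \<Rightarrow> nat) set" where
  "idx n k = ({0..<n} \<rightarrow>\<^sub>E {0..<k})"

definition matspace :: "nat \<Rightarrow> nat \<Rightarrow> cmatn set" where
  "matspace n k = {X. \<forall>x y. (x \<notin> idx n k \<or> y \<notin> idx n k) \<longrightarrow> X x y = 0}"

definition ipn :: "nat \<Rightarrow> nat \<Rightarrow> cmatn \<Rightarrow> cmatn \<Rightarrow> complex" where
  "ipn n k X Y = (1 / of_nat (k ^ n)) *
     (\<Sum>x\<in>idx n k. \<Sum>y\<in>idx n k. cnj (X y x) * Y y x)"

text \<open>Standard orthonormal basis {B_0,...,B_{k^2-1}} of M_k: Hermitian,
  orthonormal w.r.t. (1/k) Tr(X^dagger Y), and B_0 = id_k.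
  (k^2 orthonormal elements of the k^2-dimensional space M_k form a basis.)\<close>
definition std_onb :: "nat \<Rightarrow> (nat \<Rightarrow> cmat1) \<Rightarrow> bool" where
  "std_onb k Bs \<longleftrightarrow>
     (\<forall>j<k^2. \<forall>x<k. \<forall>y<k. Bs j x y = cnj (Bs j y x)) \<and>
     (\<forall>j<k^2. \<forall>l<k^2. (1 / of_nat k) * (\<Sum>x<k. \<Sum>y<k. cnj (Bs j y x) * Bs l y x)
                         = (if j = l then 1 else 0)) \<and>
     (\<forall>x<k. \<forall>y<k. Bs 0 x y = (if x = y then 1 else 0))"

definition tensor_basis :: "nat \<Rightarrow> nat \<Rightarrow> (nat \<Rightarrow> cmat1) \<Rightarrow> (nat \<Rightarrow> nat) \<Rightarrow> cmatn" where
  "tensor_basis n k Bs \<sigma> = (\<lambda>x y. if x \<in> idx n k \<and> y \<in> idx n k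
       then (\<Prod>i<n. Bs (\<sigma> i) (x i) (y i)) else 0)"

definition coeffs :: "nat \<Rightarrow> nat \<Rightarrow> (nat \<Rightarrow> cmat1) \<Rightarrow> cmatn \<Rightarrow> (nat \<Rightarrow> nat) \<Rightarrow> complex" where
  "coeffs n k Bs X = (THE c. (\<forall>\<sigma>. \<sigma> \<notin> idx n (k^2) \<longrightarrow> c \<sigma> = 0) \<and>
      (\<forall>x\<in>idx n k. \<forall>y\<in>idx n k.
          X x y = (\<Sum>\<sigma>\<in>idx n (k^2). c \<sigma> * tensor_basis n k Bs \<sigma> x y)))"

definition efron_stein :: "nat \<Rightarrow> nat \<Rightarrow> (nat \<Rightarrow> cmat1) \<Rightarrow> cmatn \<Rightarrow> nat set \<Rightarrow> cmatn" where
  "efron_stein n k Bs X S = (\<lambda>x y.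
     \<Sum>\<sigma>\<in>{\<sigma>\<in>idx n (k^2). {i\<in>{0..<n}. \<sigma> i \<noteq> 0} = S}.
        coeffs n k Bs X \<sigma> * tensor_basis n k Bs \<sigma> x y)"

definition is_state :: "nat \<Rightarrow> nat \<Rightarrow> (nat \<times> nat \<Rightarrow> nat \<times> nat \<Rightarrow> complex) \<Rightarrow> bool" where
  "is_state mA mB psi \<longleftrightarrow>
     (\<forall>p\<in>{0..<mA} \<times> {0..<mB}. \<forall>q\<in>{0..<mA} \<times> {0..<mB}. psi p q = cnj (psi q p)) \<and>
     (\<forall>v :: nat \<times> nat \<Rightarrow> complex.
        0 \<le> (\<Sum>p\<in>{0..<mA} \<times> {0..<mB}. \<Sum>q\<in>{0..<mA} \<times> {0..<mB}. cnj (v p) * psi p q * v q)) \<and>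
     (\<Sum>p\<in>{0..<mA} \<times> {0..<mB}. psi p p) = 1"

definition marg_A :: "nat \<Rightarrow> (nat \<times> nat \<Rightarrow> nat \<times> nat \<Rightarrow> complex) \<Rightarrow> cmat1" where
  "marg_A mB psi = (\<lambda>a a'. \<Sum>b<mB. psi (a, b) (a', b))"
definition marg_B :: "nat \<Rightarrow> (nat \<times> nat \<Rightarrow> nat \<times> nat \<Rightarrow> complex) \<Rightarrow> cmat1" where
  "marg_B mA psi = (\<lambda>b b'. \<Sum>a<mA. psi (a, b) (a, b'))"

text \<open>Tr((M^dagger \<otimes> Q) psi^{\<otimes> n}), where A^n \<otimes> B^n is identified with (A \<otimes> B)^n
  in the canonical way: psi^{\<otimes> n}((a,b),(a',b')) = prod_i psi (a_i,b_i) (a'_i,b'_i).\<close>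
definition markov_pairing :: "nat \<Rightarrow> nat \<Rightarrow> nat \<Rightarrow> (nat \<times> nat \<Rightarrow> nat \<times> nat \<Rightarrow> complex)
    \<Rightarrow> cmatn \<Rightarrow> cmatn \<Rightarrow> complex" where
  "markov_pairing n mA mB psi M Q =
     (\<Sum>a\<in>idx n mA. \<Sum>a'\<in>idx n mA. \<Sum>b\<in>idx n mB. \<Sum>b'\<in>idx n mB.
        cnj (M a' a) * Q b b' * (\<Prod>i<n. psi (a' i, b' i) (a i, b i)))"

definition is_markov_op :: "nat \<Rightarrow> nat \<Rightarrow> nat \<Rightarrow> (nat \<times> nat \<Rightarrow> nat \<times> nat \<Rightarrow> complex)
    \<Rightarrow> (cmatn \<Rightarrow> cmatn) \<Rightarrow> bool" where
  "is_markov_op n mA mB psi T \<longleftrightarrow>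
     (\<forall>Q\<in>matspace n mB. T Q \<in> matspace n mA) \<and>
     (\<forall>M\<in>matspace n mA. \<forall>Q\<in>matspace n mB.
        markov_pairing n mA mB psi M Q = ipn n mA M (T Q))"

end

theory Submission imports Defs "Jordan_Normal_Form.Determinant" begin

lemma onb_complete_raw:
  fixes F :: "nat \<Rightarrow> nat \<Rightarrow> complex" and c :: complex
  assumes c: "c \<noteq> 0"
    and orth: "\<And>j l. j < N \<Longrightarrow> l < N \<Longrightarrow> (\<Sum>r<N. cnj (F j r) * F l r) = (if j = l then c else 0)"
    and r: "r < N" and r': "r' < N"
  shows "(\<Sum>j<N. F j r * cnj (F j r')) = (if r = r' then c else 0)"
proof -
  define A where "A = mat N N (\<lambda>(j,r). cnj (F j r) / c)"
  define B where "B = mat N N (\<lambda>(r,l). F l r)"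
  have A: "A \<in> carrier_mat N N" and B: "B \<in> carrier_mat N N" by (auto simp: A_def B_def)
  have "A * B = 1\<^sub>m N"
  proof (rule eq_matI)
    fix i j assume i: "i < dim_row (1\<^sub>m N)" and j: "j < dim_col (1\<^sub>m N)"
    have "(A * B) $$ (i, j) = (\<Sum>r<N. cnj (F i r) / c * F j r)"
      using i j by (simp add: A_def B_def scalar_prod_def atLeast0LessThan)
    also have "\<dots> = (\<Sum>r<N. cnj (F i r) * F j r) / c"
      by (simp add: sum_divide_distrib)
    also have "\<dots> = 1\<^sub>m N $$ (i, j)" using i j orth[of i j] c by simp
    finally show "(A * B) $$ (i, j) = 1\<^sub>m N $$ (i, j)" .
  qed (auto simp: A_def B_def)
  hence BA: "B * A = 1\<^sub>m N" using mat_mult_left_right_inverse[OF A B] by blast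
  have "(B * A) $$ (r, r') = (\<Sum>j<N. F j r * (cnj (F j r') / c))"
    using r r' by (simp add: A_def B_def scalar_prod_def atLeast0LessThan)
  also have "\<dots> = (\<Sum>j<N. F j r * cnj (F j r')) / c"
    by (simp add: sum_divide_distrib)
  finally have "(\<Sum>j<N. F j r * cnj (F j r')) / c = (if r = r' then 1 else 0)"
    using BA r r' by simp
  thus ?thesis using c by (auto simp: field_simps split: if_splits)
qed

lemma sum_div_mod:
  fixes f :: "nat \<Rightarrow> nat \<Rightarrow> 'a::comm_monoid_add"
  assumes "k > 0"
  shows "(\<Sum>r<k*k. f (r div k) (r mod k)) = (\<Sum>x<k. \<Sum>y<k. f x y)"
proof -
  have "(\<Sum>x<k. \<Sum>y<k. f x y) = (\<Sum>p\<in>{..<k}\<times>{..<k}. f (fst p) (snd p))"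
    by (simp add: sum.cartesian_product split_def)
  also have "\<dots> = (\<Sum>r<k*k. f (r div k) (r mod k))"
  proof (rule sum.reindex_bij_witness[where i = "\<lambda>r. (r div k, r mod k)" and j = "\<lambda>p. fst p * k + snd p"])
    fix r assume "r \<in> {..<k*k}" thus "fst (r div k, r mod k) * k + snd (r div k, r mod k) = r" by (simp add: mult.commute)
  next
    fix r assume "r \<in> {..<k*k}" thus "(r div k, r mod k) \<in> {..<k}\<times>{..<k}"
      using assms by (simp add: less_mult_imp_div_less)
  next
    fix p :: "nat \<times> nat" assume "p \<in> {..<k}\<times>{..<k}" thus "((fst p * k + snd p) div k, (fst p * k + snd p) mod k) = p"
      using \<open>k>0\<close> by (cases p) simp
  next
    fix p :: "nat \<times> nat" assume p: "p \<in> {..<k}\<times>{..<k}"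
    then obtain a b where "p = (a,b)" "a < k" "b < k" by auto
    have "a * k + b < Suc a * k" using \<open>b<k\<close> by simp
    also have "\<dots> \<le> k * k" using \<open>a<k\<close> by (intro mult_le_mono1) simp
    finally have "a * k + b < k * k" .
    thus "fst p * k + snd p \<in> {..<k*k}" using \<open>p = (a,b)\<close> by simp
  next
    fix p :: "nat \<times> nat" assume "p \<in> {..<k}\<times>{..<k}"
    thus "f ((fst p * k + snd p) div k) ((fst p * k + snd p) mod k) = f (fst p) (snd p)" using \<open>k>0\<close> by (cases p) simp
  qed
  finally show ?thesis by simp
qed

lemma std_onb_complete:
  assumes onb: "std_onb k Bs" and k: "k > 0" and xy: "x < k" "y < k" "x' < k" "y' < k"
  shows "(\<Sum>j<k^2. Bs j x y * cnj (Bs j x' y')) = (if x = x' \<and> y = y' then of_nat k else 0)"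
proof -
  have onb_orth: "\<And>j l. j<k^2 \<Longrightarrow> l<k^2 \<Longrightarrow> (1 / of_nat k) * (\<Sum>x<k. \<Sum>y<k. cnj (Bs j y x) * Bs l y x)
                         = (if j = l then 1 else 0)"
    using onb unfolding std_onb_def by blast
  define F where "F = (\<lambda>j r. Bs j (r div k) (r mod k))"
  have orth: "(\<Sum>r<k*k. cnj (F j r) * F l r) = (if j = l then of_nat k else 0)"
    if "j < k*k" "l < k*k" for j l
  proof -
    have "(\<Sum>r<k*k. cnj (F j r) * F l r) = (\<Sum>x<k. \<Sum>y<k. cnj (Bs j x y) * Bs l x y)"
      unfolding F_def using sum_div_mod[OF k, of "\<lambda>x y. cnj (Bs j x y) * Bs l x y"] by simp
    also have "\<dots> = of_nat k * ((1 / of_nat k) * (\<Sum>x<k. \<Sum>y<k. cnj (Bs j x y) * Bs l x y))"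
      using k by simp
    also have "\<dots> = of_nat k * (if j = l then 1 else 0)"
      using onb_orth[of j l] that sum.swap[of "\<lambda>x y. cnj (Bs j x y) * Bs l x y" "{..<k}" "{..<k}"]
      by (simp add: power2_eq_square)
    finally show ?thesis by simp
  qed
  have r: "x * k + y < k * k" if "x < k" "y < k" for x y
  proof -
    have "x * k + y < Suc x * k" using that by simp
    also have "\<dots> \<le> k * k" using that by (intro mult_le_mono1) simp
    finally show ?thesis .
  qed
  have "(\<Sum>j<k*k. F j (x*k+y) * cnj (F j (x'*k+y'))) = (if x*k+y = x'*k+y' then of_nat k else 0)"
    by (rule onb_complete_raw) (use k orth r xy in auto)
  moreover have "(x*k+y = x'*k+y') \<longleftrightarrow> (x = x' \<and> y = y')"
  proof
    assume h: "x*k+y = x'*k+y'"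
    have "(x*k+y) div k = (x'*k+y') div k" "(x*k+y) mod k = (x'*k+y') mod k" using h by simp_all
    thus "x = x' \<and> y = y'" using xy k by simp
  qed simp
  ultimately show ?thesis using xy k by (simp add: F_def power2_eq_square)
qed

lemma idx_alt: "idx n k = {..<n} \<rightarrow>\<^sub>E {..<k}"
  by (simp add: idx_def atLeast0LessThan)

lemma sum_idx_prod:
  "(\<Sum>\<sigma>\<in>idx n k. \<Prod>i<n. g i (\<sigma> i)) = (\<Prod>i<n. \<Sum>j<k. (g i j :: 'a :: comm_semiring_1))"
  unfolding idx_alt by (rule prod_sum_PiE[symmetric]) auto

lemma sum_idx_prod2:
  "(\<Sum>x\<in>idx n k. \<Sum>y\<in>idx n k. \<Prod>i<n. g i (x i) (y i)) = (\<Prod>i<n. \<Sum>u<k. \<Sum>v<k. (g i u v :: 'a :: comm_semiring_1))"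
proof -
  have "(\<Prod>i<n. \<Sum>u<k. \<Sum>v<k. g i u v) = (\<Prod>i<n. \<Sum>p\<in>{..<k}\<times>{..<k}. g i (fst p) (snd p))"
    unfolding sum.cartesian_product by (simp add: case_prod_beta)
  also have "\<dots> = (\<Sum>h\<in>{..<n} \<rightarrow>\<^sub>E ({..<k}\<times>{..<k}). \<Prod>i<n. g i (fst (h i)) (snd (h i)))"
    by (rule prod_sum_PiE) auto
  also have "\<dots> = (\<Sum>p\<in>idx n k \<times> idx n k. \<Prod>i<n. g i (fst p i) (snd p i))"
  proof (rule sum.reindex_bij_witness[where i = "\<lambda>p. restrict (\<lambda>i. (fst p i, snd p i)) {..<n}"
          and j = "\<lambda>h. (restrict (\<lambda>i. fst (h i)) {..<n}, restrict (\<lambda>i. snd (h i)) {..<n})"])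
    fix h assume h: "h \<in> {..<n} \<rightarrow>\<^sub>E ({..<k}\<times>{..<k})"
    show "restrict (\<lambda>i. (fst (restrict (\<lambda>i. fst (h i)) {..<n}, restrict (\<lambda>i. snd (h i)) {..<n}) i,
           snd (restrict (\<lambda>i. fst (h i)) {..<n}, restrict (\<lambda>i. snd (h i)) {..<n}) i)) {..<n} = h"
    proof
      fix i show "restrict (\<lambda>i. (fst (restrict (\<lambda>i. fst (h i)) {..<n}, restrict (\<lambda>i. snd (h i)) {..<n}) i,
           snd (restrict (\<lambda>i. fst (h i)) {..<n}, restrict (\<lambda>i. snd (h i)) {..<n}) i)) {..<n} i = h i"
        proof (cases "i < n")
          case True thus ?thesis by simp
        next
          case False thus ?thesis using PiE_arb[OF h, of i] by simp
        qed
    qed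
    show "(restrict (\<lambda>i. fst (h i)) {..<n}, restrict (\<lambda>i. snd (h i)) {..<n}) \<in> idx n k \<times> idx n k"
    proof -
      have hi: "fst (h i) < k \<and> snd (h i) < k" if "i < n" for i
      proof -
        have "h i \<in> {..<k}\<times>{..<k}" using h that by (simp add: PiE_iff)
        thus ?thesis by (cases "h i") simp
      qed
      show ?thesis unfolding idx_alt mem_Times_iff fst_conv snd_conv restrict_PiE_iff
        using hi by simp
    qed
    show "(\<Prod>i<n. g i (fst (restrict (\<lambda>i. fst (h i)) {..<n}, restrict (\<lambda>i. snd (h i)) {..<n}) i)
              (snd (restrict (\<lambda>i. fst (h i)) {..<n}, restrict (\<lambda>i. snd (h i)) {..<n}) i))
         = (\<Prod>i<n. g i (fst (h i)) (snd (h i)))"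
      by (intro prod.cong) auto
  next
    fix p assume p: "p \<in> idx n k \<times> idx n k"
    show "(restrict (\<lambda>i. fst (restrict (\<lambda>i. (fst p i, snd p i)) {..<n} i)) {..<n},
           restrict (\<lambda>i. snd (restrict (\<lambda>i. (fst p i, snd p i)) {..<n} i)) {..<n}) = p"
    proof -
      obtain x y where xy: "p = (x,y)" "x \<in> {..<n} \<rightarrow>\<^sub>E {..<k}" "y \<in> {..<n} \<rightarrow>\<^sub>E {..<k}"
        using p by (cases p) (auto simp: idx_alt)
      have 1: "restrict (\<lambda>i. fst (restrict (\<lambda>i. (x i, y i)) {..<n} i)) {..<n} = restrict x {..<n}"
        by (rule restrict_ext) simp
      have 2: "restrict (\<lambda>i. snd (restrict (\<lambda>i. (x i, y i)) {..<n} i)) {..<n} = restrict y {..<n}"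
        by (rule restrict_ext) simp
      show ?thesis using 1 2 xy PiE_restrict[OF xy(2)] PiE_restrict[OF xy(3)] by simp
    qed
    show "restrict (\<lambda>i. (fst p i, snd p i)) {..<n} \<in> {..<n} \<rightarrow>\<^sub>E ({..<k}\<times>{..<k})"
    proof -
      have a: "fst p \<in> {..<n} \<rightarrow>\<^sub>E {..<k}" "snd p \<in> {..<n} \<rightarrow>\<^sub>E {..<k}"
        using p unfolding mem_Times_iff idx_alt by blast+
      show ?thesis unfolding restrict_PiE_iff mem_Times_iff fst_conv snd_conv
        using a by (simp add: PiE_iff)
    qed
  qed
  also have "\<dots> = (\<Sum>x\<in>idx n k. \<Sum>y\<in>idx n k. \<Prod>i<n. g i (x i) (y i))"
    unfolding sum.cartesian_product by (simp add: case_prod_beta)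
  finally show ?thesis by simp
qed


lemma std_onb_orth:
  assumes "std_onb k Bs" "j < k^2" "l < k^2"
  shows "(\<Sum>x<k. \<Sum>y<k. cnj (Bs j y x) * Bs l y x) = (if j = l then of_nat k else 0)"
proof -
  have h: "(1 / of_nat k) * (\<Sum>x<k. \<Sum>y<k. cnj (Bs j y x) * Bs l y x) = (if j = l then 1 else 0)"
    using assms unfolding std_onb_def by blast
  have "k > 0" using assms(2) by (cases k) auto
  thus ?thesis using h by (auto simp: field_simps split: if_splits)
qed

lemma idx_eq_iff:
  assumes "x \<in> idx n k" "y \<in> idx n k"
  shows "x = y \<longleftrightarrow> (\<forall>i<n. x i = y i)"
proof
  assume "\<forall>i<n. x i = y i"
  thus "x = y" using assms unfolding idx_alt by (intro PiE_ext) auto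
qed simp

lemma idx_lt: "x \<in> idx n k \<Longrightarrow> i < n \<Longrightarrow> x i < k"
  unfolding idx_alt by (auto simp: PiE_iff)

lemma prod_delta:
  "(\<Prod>i<n. (if P i then (c::complex) else 0)) = (if \<forall>i<n. P i then c ^ n else 0)"
proof (induction n)
  case (Suc n) thus ?case by (auto simp: less_Suc_eq)
qed simp

lemma tb_on_idx:
  "x \<in> idx n k \<Longrightarrow> y \<in> idx n k \<Longrightarrow> tensor_basis n k Bs \<sigma> x y = (\<Prod>i<n. Bs (\<sigma> i) (x i) (y i))"
  by (simp add: tensor_basis_def)

lemma tb_orth:
  assumes onb: "std_onb k Bs" and k: "k > 0" and \<tau>: "\<tau> \<in> idx n (k^2)" and \<sigma>: "\<sigma> \<in> idx n (k^2)"
  shows "ipn n k (tensor_basis n k Bs \<tau>) (tensor_basis n k Bs \<sigma>) = (if \<tau> = \<sigma> then 1 else 0)"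
proof -
  have "(\<Sum>x\<in>idx n k. \<Sum>y\<in>idx n k. cnj (tensor_basis n k Bs \<tau> y x) * tensor_basis n k Bs \<sigma> y x)
      = (\<Sum>x\<in>idx n k. \<Sum>y\<in>idx n k. \<Prod>i<n. cnj (Bs (\<tau> i) (y i) (x i)) * Bs (\<sigma> i) (y i) (x i))"
    by (intro sum.cong refl) (simp add: tb_on_idx prod.distrib)
  also have "\<dots> = (\<Prod>i<n. \<Sum>u<k. \<Sum>v<k. cnj (Bs (\<tau> i) v u) * Bs (\<sigma> i) v u)"
    by (rule sum_idx_prod2)
  also have "\<dots> = (\<Prod>i<n. (if \<tau> i = \<sigma> i then of_nat k else 0))"
    by (intro prod.cong refl std_onb_orth[OF onb]) (use \<tau> \<sigma> idx_lt in auto)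
  also have "\<dots> = (if \<tau> = \<sigma> then of_nat k ^ n else 0)"
    unfolding prod_delta idx_eq_iff[OF \<tau> \<sigma>] ..
  finally show ?thesis unfolding ipn_def using k by simp
qed

lemma tb_complete:
  assumes onb: "std_onb k Bs" and k: "k > 0" and xy: "x \<in> idx n k" "y \<in> idx n k" "x' \<in> idx n k" "y' \<in> idx n k"
  shows "(\<Sum>\<sigma>\<in>idx n (k^2). tensor_basis n k Bs \<sigma> x y * cnj (tensor_basis n k Bs \<sigma> x' y'))
     = (if x = x' \<and> y = y' then of_nat k ^ n else 0)"
proof -
  have "(\<Sum>\<sigma>\<in>idx n (k^2). tensor_basis n k Bs \<sigma> x y * cnj (tensor_basis n k Bs \<sigma> x' y'))
     = (\<Sum>\<sigma>\<in>idx n (k^2). \<Prod>i<n. Bs (\<sigma> i) (x i) (y i) * cnj (Bs (\<sigma> i) (x' i) (y' i)))"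
    by (intro sum.cong refl) (simp add: tb_on_idx xy prod.distrib)
  also have "\<dots> = (\<Prod>i<n. \<Sum>j<k^2. Bs j (x i) (y i) * cnj (Bs j (x' i) (y' i)))"
    by (rule sum_idx_prod)
  also have "\<dots> = (\<Prod>i<n. (if x i = x' i \<and> y i = y' i then of_nat k else 0))"
    by (intro prod.cong refl std_onb_complete[OF onb k]) (use xy idx_lt in auto)
  also have "\<dots> = (if x = x' \<and> y = y' then of_nat k ^ n else 0)"
    unfolding prod_delta idx_eq_iff[OF xy(1,3)] idx_eq_iff[OF xy(2,4)] by auto
  finally show ?thesis .
qed


lemma finite_idx[simp]: "finite (idx n k)"
  by (simp add: idx_alt finite_PiE)

lemma ipn_lin:
  assumes "finite F"
  shows "ipn n k A (\<lambda>x y. \<Sum>\<sigma>\<in>F. c \<sigma> * B \<sigma> x y) = (\<Sum>\<sigma>\<in>F. c \<sigma> * ipn n k A (B \<sigma>))"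
proof -
  let ?I = "idx n k"
  have "(\<Sum>x\<in>?I. \<Sum>y\<in>?I. cnj (A y x) * (\<Sum>\<sigma>\<in>F. c \<sigma> * B \<sigma> y x))
      = (\<Sum>x\<in>?I. \<Sum>y\<in>?I. \<Sum>\<sigma>\<in>F. c \<sigma> * (cnj (A y x) * B \<sigma> y x))"
    by (simp add: sum_distrib_left mult.left_commute)
  also have "\<dots> = (\<Sum>x\<in>?I. \<Sum>\<sigma>\<in>F. \<Sum>y\<in>?I. c \<sigma> * (cnj (A y x) * B \<sigma> y x))"
    by (intro sum.cong refl) (rule sum.swap)
  also have "\<dots> = (\<Sum>\<sigma>\<in>F. \<Sum>x\<in>?I. \<Sum>y\<in>?I. c \<sigma> * (cnj (A y x) * B \<sigma> y x))"
    by (rule sum.swap)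
  also have "\<dots> = (\<Sum>\<sigma>\<in>F. c \<sigma> * (\<Sum>x\<in>?I. \<Sum>y\<in>?I. cnj (A y x) * B \<sigma> y x))"
    by (simp add: sum_distrib_left)
  finally have h: "(\<Sum>x\<in>?I. \<Sum>y\<in>?I. cnj (A y x) * (\<Sum>\<sigma>\<in>F. c \<sigma> * B \<sigma> y x))
      = (\<Sum>\<sigma>\<in>F. c \<sigma> * (\<Sum>x\<in>?I. \<Sum>y\<in>?I. cnj (A y x) * B \<sigma> y x))" .
  show ?thesis unfolding ipn_def h by (simp add: sum_distrib_left mult.left_commute)
qed

lemma ipn_cong:
  assumes "\<And>x y. x \<in> idx n k \<Longrightarrow> y \<in> idx n k \<Longrightarrow> X x y = Y x y"
  shows "ipn n k A X = ipn n k A Y"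
  unfolding ipn_def using assms by (intro arg_cong[where f = "\<lambda>z. _ * z"] sum.cong refl) simp

lemma expansion:
  assumes onb: "std_onb k Bs" and k: "k > 0" and xy: "x \<in> idx n k" "y \<in> idx n k"
  shows "(\<Sum>\<sigma>\<in>idx n (k^2). ipn n k (tensor_basis n k Bs \<sigma>) X * tensor_basis n k Bs \<sigma> x y) = X x y"
proof -
  let ?I = "idx n k" and ?J = "idx n (k^2)" and ?K = "of_nat (k ^ n) :: complex"
  let ?t = "tensor_basis n k Bs"
  have "(\<Sum>\<sigma>\<in>?J. ipn n k (?t \<sigma>) X * ?t \<sigma> x y)
      = (\<Sum>\<sigma>\<in>?J. (1 / ?K) * (\<Sum>x'\<in>?I. \<Sum>y'\<in>?I. X y' x' * (?t \<sigma> x y * cnj (?t \<sigma> y' x'))))"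
    unfolding ipn_def by (intro sum.cong refl) (simp add: sum_distrib_left sum_distrib_right mult_ac)
  also have "\<dots> = (1 / ?K) * (\<Sum>\<sigma>\<in>?J. \<Sum>x'\<in>?I. \<Sum>y'\<in>?I. X y' x' * (?t \<sigma> x y * cnj (?t \<sigma> y' x')))"
    by (simp add: sum_distrib_left)
  also have "(\<Sum>\<sigma>\<in>?J. \<Sum>x'\<in>?I. \<Sum>y'\<in>?I. X y' x' * (?t \<sigma> x y * cnj (?t \<sigma> y' x')))
      = (\<Sum>x'\<in>?I. \<Sum>\<sigma>\<in>?J. \<Sum>y'\<in>?I. X y' x' * (?t \<sigma> x y * cnj (?t \<sigma> y' x')))"
    by (rule sum.swap)
  also have "\<dots> = (\<Sum>x'\<in>?I. \<Sum>y'\<in>?I. \<Sum>\<sigma>\<in>?J. X y' x' * (?t \<sigma> x y * cnj (?t \<sigma> y' x')))"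
    by (rule sum.cong[OF refl]) (rule sum.swap)
  also have "\<dots> = (\<Sum>x'\<in>?I. \<Sum>y'\<in>?I. X y' x' * (\<Sum>\<sigma>\<in>?J. ?t \<sigma> x y * cnj (?t \<sigma> y' x')))"
    by (simp add: sum_distrib_left)
  also have "\<dots> = (\<Sum>x'\<in>?I. \<Sum>y'\<in>?I. (if y' = x then (if x' = y then X x y * ?K else 0) else 0))"
  proof (intro sum.cong refl)
    fix x' y' assume "x' \<in> ?I" "y' \<in> ?I"
    thus "X y' x' * (\<Sum>\<sigma>\<in>?J. ?t \<sigma> x y * cnj (?t \<sigma> y' x')) = (if y' = x then (if x' = y then X x y * ?K else 0) else 0)"
      using tb_complete[OF onb k xy, of y' x'] by auto
  qed
  also have "\<dots> = X x y * ?K"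
    using xy by simp
  finally show ?thesis using k by simp
qed

lemma coeffs_eq:
  assumes onb: "std_onb k Bs" and k: "k > 0"
  shows "coeffs n k Bs X = (\<lambda>\<sigma>. if \<sigma> \<in> idx n (k^2) then ipn n k (tensor_basis n k Bs \<sigma>) X else 0)"
  unfolding coeffs_def
proof (rule the_equality)
  let ?c = "\<lambda>\<sigma>. if \<sigma> \<in> idx n (k^2) then ipn n k (tensor_basis n k Bs \<sigma>) X else 0"
  show "(\<forall>\<sigma>. \<sigma> \<notin> idx n (k^2) \<longrightarrow> ?c \<sigma> = 0) \<and>
      (\<forall>x\<in>idx n k. \<forall>y\<in>idx n k. X x y = (\<Sum>\<sigma>\<in>idx n (k^2). ?c \<sigma> * tensor_basis n k Bs \<sigma> x y))"
    using expansion[OF onb k] by simp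
next
  fix c assume c: "(\<forall>\<sigma>. \<sigma> \<notin> idx n (k^2) \<longrightarrow> c \<sigma> = 0) \<and>
      (\<forall>x\<in>idx n k. \<forall>y\<in>idx n k. X x y = (\<Sum>\<sigma>\<in>idx n (k^2). c \<sigma> * tensor_basis n k Bs \<sigma> x y))"
  show "c = (\<lambda>\<sigma>. if \<sigma> \<in> idx n (k^2) then ipn n k (tensor_basis n k Bs \<sigma>) X else 0)"
  proof
    fix \<tau>
    show "c \<tau> = (if \<tau> \<in> idx n (k^2) then ipn n k (tensor_basis n k Bs \<tau>) X else 0)"
    proof (cases "\<tau> \<in> idx n (k^2)")
      case True
      have "ipn n k (tensor_basis n k Bs \<tau>) X
          = ipn n k (tensor_basis n k Bs \<tau>) (\<lambda>x y. \<Sum>\<sigma>\<in>idx n (k^2). c \<sigma> * tensor_basis n k Bs \<sigma> x y)"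
        using c by (intro ipn_cong) auto
      also have "\<dots> = (\<Sum>\<sigma>\<in>idx n (k^2). c \<sigma> * ipn n k (tensor_basis n k Bs \<tau>) (tensor_basis n k Bs \<sigma>))"
        by (rule ipn_lin) simp
      also have "\<dots> = (\<Sum>\<sigma>\<in>idx n (k^2). (if \<sigma> = \<tau> then c \<sigma> else 0))"
        by (intro sum.cong refl) (use tb_orth[OF onb k True] in auto)
      also have "\<dots> = c \<tau>" using True by simp
      finally show ?thesis using True by simp
    qed (use c in auto)
  qed
qed


definition pp :: "nat \<Rightarrow> nat \<Rightarrow> (nat \<times> nat \<Rightarrow> nat \<times> nat \<Rightarrow> complex) \<Rightarrow> (nat \<Rightarrow> cmat1) \<Rightarrow> (nat \<Rightarrow> cmat1) \<Rightarrow> nat \<Rightarrow> nat \<Rightarrow> complex" where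
  "pp mA mB psi BA BB j l = (\<Sum>u<mA. \<Sum>u'<mA. \<Sum>v<mB. \<Sum>v'<mB. cnj (BA j u' u) * BB l v v' * psi (u',v') (u,v))"

lemma mp_tb:
  "markov_pairing n mA mB psi (tensor_basis n mA BA \<tau>) (tensor_basis n mB BB \<sigma>) = (\<Prod>i<n. pp mA mB psi BA BB (\<tau> i) (\<sigma> i))"
proof -
  let ?IA = "idx n mA" and ?IB = "idx n mB"
  have "markov_pairing n mA mB psi (tensor_basis n mA BA \<tau>) (tensor_basis n mB BB \<sigma>)
     = (\<Sum>a\<in>?IA. \<Sum>a'\<in>?IA. \<Sum>b\<in>?IB. \<Sum>b'\<in>?IB. \<Prod>i<n. cnj (BA (\<tau> i) (a' i) (a i)) * BB (\<sigma> i) (b i) (b' i) * psi (a' i, b' i) (a i, b i))"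
    unfolding markov_pairing_def
    by (intro sum.cong refl) (simp add: tb_on_idx prod.distrib)
  also have "\<dots> = (\<Sum>a\<in>?IA. \<Sum>a'\<in>?IA. \<Prod>i<n. \<Sum>v<mB. \<Sum>v'<mB. cnj (BA (\<tau> i) (a' i) (a i)) * BB (\<sigma> i) v v' * psi (a' i, v') (a i, v))"
    by (intro sum.cong refl) (rule sum_idx_prod2)
  also have "\<dots> = (\<Prod>i<n. \<Sum>u<mA. \<Sum>u'<mA. \<Sum>v<mB. \<Sum>v'<mB. cnj (BA (\<tau> i) u' u) * BB (\<sigma> i) v v' * psi (u', v') (u, v))"
    by (rule sum_idx_prod2)
  finally show ?thesis unfolding pp_def .
qed

lemma pp_j0:
  assumes onbA: "std_onb mA BA" and onbB: "std_onb mB BB" and j: "j < mA^2"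
    and margA: "\<forall>a<mA. \<forall>a'<mA. marg_A mB psi a a' = (if a = a' then 1 / of_nat mA else 0)"
  shows "pp mA mB psi BA BB j 0 = (if j = 0 then 1 else 0)"
proof -
  have B0: "BB 0 v v' = (if v = v' then 1 else 0)" if "v < mB" "v' < mB" for v v'
    using onbB that unfolding std_onb_def by blast
  have A0: "BA 0 v v' = (if v = v' then 1 else 0)" if "v < mA" "v' < mA" for v v'
    using onbA that unfolding std_onb_def by blast
  have mA: "mA > 0" using j by (cases mA) auto
  have 1: "(\<Sum>v<mB. \<Sum>v'<mB. cnj (BA j u' u) * BB 0 v v' * psi (u',v') (u,v)) = cnj (BA j u' u) * marg_A mB psi u' u"
    for u u'
  proof -
    have "(\<Sum>v<mB. \<Sum>v'<mB. cnj (BA j u' u) * BB 0 v v' * psi (u',v') (u,v))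
        = (\<Sum>v<mB. \<Sum>v'<mB. if v' = v then cnj (BA j u' u) * psi (u',v) (u,v) else 0)"
      by (intro sum.cong refl) (simp add: B0)
    also have "\<dots> = (\<Sum>v<mB. cnj (BA j u' u) * psi (u',v) (u,v))" by simp
    also have "\<dots> = cnj (BA j u' u) * marg_A mB psi u' u"
      unfolding marg_A_def by (simp add: sum_distrib_left)
    finally show ?thesis .
  qed
  have "pp mA mB psi BA BB j 0 = (\<Sum>u<mA. \<Sum>u'<mA. cnj (BA j u' u) * marg_A mB psi u' u)"
    unfolding pp_def 1 ..
  also have "\<dots> = (\<Sum>u<mA. \<Sum>u'<mA. if u' = u then cnj (BA j u u) / of_nat mA else 0)"
    by (intro sum.cong refl) (simp add: margA)
  also have "\<dots> = (\<Sum>u<mA. cnj (BA j u u)) / of_nat mA"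
    by (simp add: sum_divide_distrib)
  also have "(\<Sum>u<mA. cnj (BA j u u)) = (\<Sum>x<mA. \<Sum>y<mA. cnj (BA j y x) * BA 0 y x)"
  proof -
    have "(\<Sum>x<mA. \<Sum>y<mA. cnj (BA j y x) * BA 0 y x) = (\<Sum>x<mA. \<Sum>y<mA. if y = x then cnj (BA j x x) else 0)"
      by (intro sum.cong refl) (simp add: A0)
    thus ?thesis by simp
  qed
  also have "\<dots> = (if j = 0 then of_nat mA else 0)"
    using std_onb_orth[OF onbA j, of 0] mA by simp
  finally show ?thesis using mA by simp
qed

lemma pp_0l:
  assumes onbA: "std_onb mA BA" and onbB: "std_onb mB BB" and l: "l < mB^2"
    and margB: "\<forall>b<mB. \<forall>b'<mB. marg_B mA psi b b' = (if b = b' then 1 / of_nat mB else 0)"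
  shows "pp mA mB psi BA BB 0 l = (if l = 0 then 1 else 0)"
proof -
  have B0: "BB 0 v v' = (if v = v' then 1 else 0)" if "v < mB" "v' < mB" for v v'
    using onbB that unfolding std_onb_def by blast
  have A0: "BA 0 v v' = (if v = v' then 1 else 0)" if "v < mA" "v' < mA" for v v'
    using onbA that unfolding std_onb_def by blast
  have mB: "mB > 0" using l by (cases mB) auto
  have "pp mA mB psi BA BB 0 l = (\<Sum>u<mA. \<Sum>u'<mA. if u' = u then (\<Sum>v<mB. \<Sum>v'<mB. BB l v v' * psi (u,v') (u,v)) else 0)"
    unfolding pp_def by (intro sum.cong refl) (simp add: A0)
  also have "\<dots> = (\<Sum>u<mA. \<Sum>v<mB. \<Sum>v'<mB. BB l v v' * psi (u,v') (u,v))" by simp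
  also have "\<dots> = (\<Sum>v<mB. \<Sum>u<mA. \<Sum>v'<mB. BB l v v' * psi (u,v') (u,v))" by (rule sum.swap)
  also have "\<dots> = (\<Sum>v<mB. \<Sum>v'<mB. \<Sum>u<mA. BB l v v' * psi (u,v') (u,v))"
    by (rule sum.cong[OF refl]) (rule sum.swap)
  also have "\<dots> = (\<Sum>v<mB. \<Sum>v'<mB. BB l v v' * marg_B mA psi v' v)"
    unfolding marg_B_def by (simp add: sum_distrib_left)
  also have "\<dots> = (\<Sum>v<mB. \<Sum>v'<mB. if v' = v then BB l v v / of_nat mB else 0)"
    by (intro sum.cong refl) (simp add: margB)
  also have "\<dots> = (\<Sum>v<mB. BB l v v) / of_nat mB"
    by (simp add: sum_divide_distrib)
  also have "(\<Sum>v<mB. BB l v v) = (\<Sum>x<mB. \<Sum>y<mB. cnj (BB 0 y x) * BB l y x)"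
  proof -
    have "(\<Sum>x<mB. \<Sum>y<mB. cnj (BB 0 y x) * BB l y x) = (\<Sum>x<mB. \<Sum>y<mB. if y = x then BB l x x else 0)"
      by (intro sum.cong refl) (simp add: B0)
    thus ?thesis by simp
  qed
  also have "\<dots> = (if 0 = l then of_nat mB else 0)"
    using std_onb_orth[OF onbB _ l, of 0] mB by simp
  finally show ?thesis using mB by simp
qed

lemma mp_add:
  "markov_pairing n mA mB psi M (\<lambda>x y. f x y + g x y) = markov_pairing n mA mB psi M f + markov_pairing n mA mB psi M g"
  unfolding markov_pairing_def by (simp add: distrib_left distrib_right sum.distrib)

lemma mp_smult:
  "markov_pairing n mA mB psi M (\<lambda>x y. c * f x y) = c * markov_pairing n mA mB psi M f"
  unfolding markov_pairing_def by (simp add: sum_distrib_left mult_ac)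

lemma mp_lin:
  assumes "finite F"
  shows "markov_pairing n mA mB psi M (\<lambda>x y. \<Sum>\<sigma>\<in>F. c \<sigma> * B \<sigma> x y) = (\<Sum>\<sigma>\<in>F. c \<sigma> * markov_pairing n mA mB psi M (B \<sigma>))"
  using assms
proof (induction F rule: finite_induct)
  case empty
  thus ?case unfolding markov_pairing_def by simp
next
  case (insert a F)
  have "markov_pairing n mA mB psi M (\<lambda>x y. \<Sum>\<sigma>\<in>insert a F. c \<sigma> * B \<sigma> x y)
      = markov_pairing n mA mB psi M (\<lambda>x y. c a * B a x y + (\<Sum>\<sigma>\<in>F. c \<sigma> * B \<sigma> x y))"
    using insert by simp
  also have "\<dots> = c a * markov_pairing n mA mB psi M (B a) + (\<Sum>\<sigma>\<in>F. c \<sigma> * markov_pairing n mA mB psi M (B \<sigma>))"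
    unfolding mp_add mp_smult insert.IH ..
  finally show ?case using insert by simp
qed

lemma mp_cong:
  assumes "\<And>x y. x \<in> idx n mB \<Longrightarrow> y \<in> idx n mB \<Longrightarrow> Q x y = Q' x y"
  shows "markov_pairing n mA mB psi M Q = markov_pairing n mA mB psi M Q'"
  unfolding markov_pairing_def using assms by (intro sum.cong refl) simp


lemma tb_matspace: "tensor_basis n k Bs \<sigma> \<in> matspace n k"
  unfolding matspace_def tensor_basis_def by auto

lemma es_matspace: "efron_stein n k Bs X S \<in> matspace n k"
  unfolding matspace_def efron_stein_def tensor_basis_def by auto

lemma mp_tb_zero:
  assumes onbA: "std_onb mA BA" and onbB: "std_onb mB BB"
    and margA: "\<forall>a<mA. \<forall>a'<mA. marg_A mB psi a a' = (if a = a' then 1 / of_nat mA else 0)"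
    and margB: "\<forall>b<mB. \<forall>b'<mB. marg_B mA psi b b' = (if b = b' then 1 / of_nat mB else 0)"
    and \<tau>: "\<tau> \<in> idx n (mA^2)" and \<sigma>: "\<sigma> \<in> idx n (mB^2)"
    and ne: "{i\<in>{0..<n}. \<tau> i \<noteq> 0} \<noteq> {i\<in>{0..<n}. \<sigma> i \<noteq> 0}"
  shows "markov_pairing n mA mB psi (tensor_basis n mA BA \<tau>) (tensor_basis n mB BB \<sigma>) = 0"
proof -
  have "\<exists>i. i < n \<and> (\<tau> i = 0) \<noteq> (\<sigma> i = 0)"
  proof (rule ccontr)
    assume "\<not> (\<exists>i. i < n \<and> (\<tau> i = 0) \<noteq> (\<sigma> i = 0))"
    hence "{i\<in>{0..<n}. \<tau> i \<noteq> 0} = {i\<in>{0..<n}. \<sigma> i \<noteq> 0}" by auto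
    thus False using ne by simp
  qed
  then obtain i where i: "i < n" "(\<tau> i = 0) \<noteq> (\<sigma> i = 0)" by blast
  have "pp mA mB psi BA BB (\<tau> i) (\<sigma> i) = 0"
  proof (cases "\<sigma> i = 0")
    case True
    thus ?thesis using i pp_j0[OF onbA onbB idx_lt[OF \<tau> i(1)] margA] by simp
  next
    case False
    hence "\<tau> i = 0" using i by simp
    thus ?thesis using False pp_0l[OF onbA onbB idx_lt[OF \<sigma> i(1)] margB] by simp
  qed
  thus ?thesis unfolding mp_tb using i by (intro prod_zero) auto
qed

theorem proposition3p12:
  fixes n mA mB :: nat
    and psi :: "nat \<times> nat \<Rightarrow> nat \<times> nat \<Rightarrow> complex"
    and T :: "cmatn \<Rightarrow> cmatn"
    and BA BB :: "nat \<Rightarrow> cmat1"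
    and Q :: cmatn
    and S :: "nat set"
  assumes "n > 0" and "mA > 0" and "mB > 0"
    and "is_state mA mB psi"
    and "\<forall>a<mA. \<forall>a'<mA. marg_A mB psi a a' = (if a = a' then 1 / of_nat mA else 0)"
    and "\<forall>b<mB. \<forall>b'<mB. marg_B mA psi b b' = (if b = b' then 1 / of_nat mB else 0)"
    and "is_markov_op n mA mB psi T"
    and "std_onb mA BA" and "std_onb mB BB"
    and "Q \<in> matspace n mB"
    and "S \<subseteq> {0..<n}"
  shows "T (efron_stein n mB BB Q S) = efron_stein n mA BA (T Q) S"
proof -
  note mA = assms(2) and mB = assms(3) and margA = assms(5) and margB = assms(6)
    and onbA = assms(8) and onbB = assms(9) and Qm = assms(10)
  have Tm: "\<And>Z. Z \<in> matspace n mB \<Longrightarrow> T Z \<in> matspace n mA"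
    and Tp: "\<And>M Z. M \<in> matspace n mA \<Longrightarrow> Z \<in> matspace n mB \<Longrightarrow>
        markov_pairing n mA mB psi M Z = ipn n mA M (T Z)"
    using assms(7) unfolding is_markov_op_def by blast+
  define supp where "supp = (\<lambda>\<sigma>::nat\<Rightarrow>nat. {i\<in>{0..<n}. \<sigma> i \<noteq> 0})"
  let ?tA = "tensor_basis n mA BA" and ?tB = "tensor_basis n mB BB"
  let ?IA = "idx n (mA^2)" and ?IB = "idx n (mB^2)"
  define cQ where "cQ = coeffs n mB BB Q"
  define Q' where "Q' = efron_stein n mB BB Q S"
  have cQ: "\<And>\<sigma>. \<sigma> \<in> ?IB \<Longrightarrow> cQ \<sigma> = ipn n mB (?tB \<sigma>) Q"
    unfolding cQ_def coeffs_eq[OF onbB mB] by simp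
  have Q'm: "Q' \<in> matspace n mB" unfolding Q'_def by (rule es_matspace)
  have key: "ipn n mA (?tA \<tau>) (T Q') = (if supp \<tau> = S then ipn n mA (?tA \<tau>) (T Q) else 0)"
    if \<tau>: "\<tau> \<in> ?IA" for \<tau>
  proof -
    let ?m = "\<lambda>\<sigma>. markov_pairing n mA mB psi (?tA \<tau>) (?tB \<sigma>)"
    have z: "?m \<sigma> = 0" if "\<sigma> \<in> ?IB" "supp \<sigma> \<noteq> supp \<tau>" for \<sigma>
      using mp_tb_zero[OF onbA onbB margA margB \<tau> that(1)] that(2) unfolding supp_def by metis
    have "ipn n mA (?tA \<tau>) (T Q') = markov_pairing n mA mB psi (?tA \<tau>) Q'"
      using Tp[OF tb_matspace Q'm] by simp
    also have "\<dots> = (\<Sum>\<sigma>\<in>{\<sigma>\<in>?IB. supp \<sigma> = S}. cQ \<sigma> * ?m \<sigma>)"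
      unfolding Q'_def efron_stein_def supp_def cQ_def by (rule mp_lin) simp
    finally have 1: "ipn n mA (?tA \<tau>) (T Q') = (\<Sum>\<sigma>\<in>{\<sigma>\<in>?IB. supp \<sigma> = S}. cQ \<sigma> * ?m \<sigma>)" .
    have "ipn n mA (?tA \<tau>) (T Q) = markov_pairing n mA mB psi (?tA \<tau>) Q"
      using Tp[OF tb_matspace Qm] by simp
    also have "\<dots> = markov_pairing n mA mB psi (?tA \<tau>) (\<lambda>x y. \<Sum>\<sigma>\<in>?IB. cQ \<sigma> * ?tB \<sigma> x y)"
    proof (rule mp_cong)
      fix x y assume "x \<in> idx n mB" "y \<in> idx n mB"
      thus "Q x y = (\<Sum>\<sigma>\<in>?IB. cQ \<sigma> * ?tB \<sigma> x y)"
        using expansion[OF onbB mB, of x n y Q] cQ by simp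
    qed
    also have "\<dots> = (\<Sum>\<sigma>\<in>?IB. cQ \<sigma> * ?m \<sigma>)"
      by (rule mp_lin) simp
    finally have 2: "ipn n mA (?tA \<tau>) (T Q) = (\<Sum>\<sigma>\<in>?IB. cQ \<sigma> * ?m \<sigma>)" .
    show ?thesis
    proof (cases "supp \<tau> = S")
      case True
      have "(\<Sum>\<sigma>\<in>{\<sigma>\<in>?IB. supp \<sigma> = S}. cQ \<sigma> * ?m \<sigma>) = (\<Sum>\<sigma>\<in>?IB. if supp \<sigma> = S then cQ \<sigma> * ?m \<sigma> else 0)"
        by (rule sum.inter_filter) simp
      also have "\<dots> = (\<Sum>\<sigma>\<in>?IB. cQ \<sigma> * ?m \<sigma>)"
        by (intro sum.cong refl) (use z True in auto)
      finally show ?thesis using 1 2 True by simp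
    next
      case False
      have "(\<Sum>\<sigma>\<in>{\<sigma>\<in>?IB. supp \<sigma> = S}. cQ \<sigma> * ?m \<sigma>) = 0"
        by (intro sum.neutral) (use z False in auto)
      thus ?thesis using 1 False by simp
    qed
  qed
  show ?thesis
  proof (intro ext)
    fix x y
    show "T (efron_stein n mB BB Q S) x y = efron_stein n mA BA (T Q) S x y"
    proof (cases "x \<in> idx n mA \<and> y \<in> idx n mA")
      case True
      have "T Q' x y = (\<Sum>\<tau>\<in>?IA. ipn n mA (?tA \<tau>) (T Q') * ?tA \<tau> x y)"
        using expansion[OF onbA mA, of x n y "T Q'"] True by simp
      also have "\<dots> = (\<Sum>\<tau>\<in>?IA. if supp \<tau> = S then ipn n mA (?tA \<tau>) (T Q) * ?tA \<tau> x y else 0)"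
        by (intro sum.cong refl) (simp add: key)
      also have "\<dots> = (\<Sum>\<tau>\<in>{\<tau>\<in>?IA. supp \<tau> = S}. ipn n mA (?tA \<tau>) (T Q) * ?tA \<tau> x y)"
        by (rule sum.inter_filter[symmetric]) simp
      also have "\<dots> = efron_stein n mA BA (T Q) S x y"
        unfolding efron_stein_def supp_def coeffs_eq[OF onbA mA] by (intro sum.cong refl) simp
      finally show ?thesis unfolding Q'_def .
    next
      case False
      have "T Q' x y = 0" using Tm[OF Q'm] False unfolding matspace_def by blast
      moreover have "efron_stein n mA BA (T Q) S x y = 0"
        using es_matspace[of n mA BA "T Q" S] False unfolding matspace_def by blast
      ultimately show ?thesis unfolding Q'_def by simp
    qed
  qed
qed

end
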